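(* Let $0<c_1\le c_2$ be constants, let $n$ be sufficiently large, let $t\in[1,n^{0.1}]$, and let $H$ be an undirected graph on $n$ vertices in which every vertex has degree between $c_1t$ and $c_2t$ and which has no cycle of length at most $8$. Then for any two vertices $u,v$ of $H^2$, the number of paths of length $2$ in $H^2$ connecting $u$ and $v$ is $O(t)$, where the implied constant depends only on $c_1,c_2$.
   Context: $H^2$ (the square of $H$) is the graph on the vertex set of $H$ in which $u\neq v$ are adjacent if and only if there is a path of length exactly $2$ between $u$ and $v$ in $H$. *)

theory Defs
  imports Complex_Main
begin

definition simple_graph :: "'a set \<Rightarrow> ('a \<Rightarrow> 'a \<Rightarrow> bool) \<Rightarrow> bool" where
  "simple_graph V E \<longleftrightarrow> finite V \<and> (\<forall>x y. E x y \<longrightarrow> x \<in> V \<and> y \<in> V)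
     \<and> (\<forall>x y. E x y \<longrightarrow> E y x) \<and> (\<forall>x. \<not> E x x)"

definition degree :: "'a set \<Rightarrow> ('a \<Rightarrow> 'a \<Rightarrow> bool) \<Rightarrow> 'a \<Rightarrow> nat" where
  "degree V E v = card {w \<in> V. E v w}"

definition has_cycle_of_length :: "'a set \<Rightarrow> ('a \<Rightarrow> 'a \<Rightarrow> bool) \<Rightarrow> nat \<Rightarrow> bool" where
  "has_cycle_of_length V E k \<longleftrightarrow> k \<ge> 3 \<and> (\<exists>xs. length xs = k \<and> distinct xs \<and> set xs \<subseteq> V
     \<and> (\<forall>i<k. E (xs ! i) (xs ! ((i + 1) mod k))))"

definition sq_adj :: "'a set \<Rightarrow> ('a \<Rightarrow> 'a \<Rightarrow> bool) \<Rightarrow> 'a \<Rightarrow> 'a \<Rightarrow> bool" where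
  "sq_adj V E u v \<longleftrightarrow> u \<noteq> v \<and> (\<exists>w\<in>V. E u w \<and> E w v)"

definition num_paths2 :: "'a set \<Rightarrow> ('a \<Rightarrow> 'a \<Rightarrow> bool) \<Rightarrow> 'a \<Rightarrow> 'a \<Rightarrow> nat" where
  "num_paths2 V R u v = card {w \<in> V. w \<noteq> u \<and> w \<noteq> v \<and> R u w \<and> R w v}"

end

theory Submission
  imports Defs
begin
lemma cycI:
  assumes sg: "simple_graph V E" and "distinct xs" and "length xs = k" and "3 \<le> k"
    and "\<forall>i<k. E (xs ! i) (xs ! ((i + 1) mod k))"
  shows "has_cycle_of_length V E k"
proof -
  have "set xs \<subseteq> V"
  proof
    fix x assume "x \<in> set xs"
    then obtain i where "i < k" "xs ! i = x" using assms by (auto simp: in_set_conv_nth)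
    then show "x \<in> V" using assms(5) sg unfolding simple_graph_def by blast
  qed
  then show ?thesis unfolding has_cycle_of_length_def using assms by blast
qed

lemma cyc3: "simple_graph V E \<Longrightarrow> distinct [a,b,c] \<Longrightarrow> E a b \<Longrightarrow> E b c \<Longrightarrow> E c a
  \<Longrightarrow> has_cycle_of_length V E 3"
proof -
  assume h: "simple_graph V E" "distinct [a,b,c]" "E a b" "E b c" "E c a"
  have "has_cycle_of_length V E (length [a,b,c])"
    apply (rule cycI[OF h(1,2) refl])
    apply (simp_all only: length_Cons list.size(3) All_less_Suc2)
    using h apply simp_all
    done
  then show ?thesis by (simp add: eval_nat_numeral)
qed

lemma cyc4: "simple_graph V E \<Longrightarrow> distinct [a,b,c,d] \<Longrightarrow> E a b \<Longrightarrow> E b c \<Longrightarrow> E c d \<Longrightarrow> E d a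
  \<Longrightarrow> has_cycle_of_length V E 4"
proof -
  assume h: "simple_graph V E" "distinct [a,b,c,d]" "E a b" "E b c" "E c d" "E d a"
  have "has_cycle_of_length V E (length [a,b,c,d])"
    apply (rule cycI[OF h(1,2) refl])
    apply (simp_all only: length_Cons list.size(3) All_less_Suc2)
    using h apply simp_all
    done
  then show ?thesis by (simp add: eval_nat_numeral)
qed

lemma cyc6: "simple_graph V E \<Longrightarrow> distinct [a,b,c,d,e,f] \<Longrightarrow> E a b \<Longrightarrow> E b c \<Longrightarrow> E c d \<Longrightarrow> E d e \<Longrightarrow> E e f \<Longrightarrow> E f a
  \<Longrightarrow> has_cycle_of_length V E 6"
proof -
  assume h: "simple_graph V E" "distinct [a,b,c,d,e,f]" "E a b" "E b c" "E c d" "E d e" "E e f" "E f a"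
  have "has_cycle_of_length V E (length [a,b,c,d,e,f])"
    apply (rule cycI[OF h(1,2) refl])
    apply (simp_all only: length_Cons list.size(3) All_less_Suc2)
    using h apply simp_all
    done
  then show ?thesis by (simp add: eval_nat_numeral)
qed

lemma cyc8: "simple_graph V E \<Longrightarrow> distinct [a,b,c,d,e,f,g,h] \<Longrightarrow> E a b \<Longrightarrow> E b c \<Longrightarrow> E c d \<Longrightarrow> E d e \<Longrightarrow> E e f \<Longrightarrow> E f g \<Longrightarrow> E g h \<Longrightarrow> E h a
  \<Longrightarrow> has_cycle_of_length V E 8"
proof -
  assume h: "simple_graph V E" "distinct [a,b,c,d,e,f,g,h]" "E a b" "E b c" "E c d" "E d e" "E e f" "E f g" "E g h" "E h a"
  have "has_cycle_of_length V E (length [a,b,c,d,e,f,g,h])"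
    apply (rule cycI[OF h(1,2) refl])
    apply (simp_all only: length_Cons list.size(3) All_less_Suc2)
    using h apply simp_all
    done
  then show ?thesis by (simp add: eval_nat_numeral)
qed

lemma main_bound:
  assumes sg: "simple_graph V E" and nc: "\<forall>k\<le>8. \<not> has_cycle_of_length V E k"
    and uV: "u \<in> V" and vV: "v \<in> V" and uv: "u \<noteq> v"
    and deg: "\<forall>x\<in>V. real (degree V E x) \<le> D"
  shows "real (num_paths2 V (sq_adj V E) u v) \<le> D + 1"
proof -
  have EV: "E x y \<Longrightarrow> x \<in> V \<and> y \<in> V" for x y using sg unfolding simple_graph_def by blast
  have Es: "E x y \<Longrightarrow> E y x" for x y using sg unfolding simple_graph_def by blast
  have Ei: "\<not> E x x" for x using sg unfolding simple_graph_def by blast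
  have n3: "\<not> has_cycle_of_length V E 3" and n4: "\<not> has_cycle_of_length V E 4"
    and n6: "\<not> has_cycle_of_length V E 6" and n8: "\<not> has_cycle_of_length V E 8"
    using nc by (simp_all del: has_cycle_of_length_def)
  have finV: "finite V" using sg unfolding simple_graph_def by blast
  define S where "S = {w \<in> V. w \<noteq> u \<and> w \<noteq> v \<and> sq_adj V E u w \<and> sq_adj V E w v}"
  define S1 where "S1 = {w \<in> S. \<exists>a. E u a \<and> E a w \<and> E v a}"
  have finS: "finite S" using finV unfolding S_def by auto
  have noadj: "\<not> E u w \<and> \<not> E v w" if "w \<in> S" for w
  proof -
    from that obtain a b where ab: "E u a" "E a w" "E w b" "E b v" "w \<noteq> u" "w \<noteq> v"
      unfolding S_def sq_adj_def by blast
    show ?thesis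
    proof
      show "\<not> E u w"
      proof
        assume "E u w"
        then have "has_cycle_of_length V E 3"
          using cyc3[OF sg, of u a w] ab Ei Es by (metis distinct_length_2_or_more distinct_singleton)
        then show False using n3 by blast
      qed
      show "\<not> E v w"
      proof
        assume "E v w"
        then have "has_cycle_of_length V E 3"
          using cyc3[OF sg, of v w b] ab Ei Es by (metis distinct_length_2_or_more distinct_singleton)
        then show False using n3 by blast
      qed
    qed
  qed
  have c1: "real (card S1) \<le> D"
  proof (cases "S1 = {}")
    case True
    then show ?thesis using deg uV by (metis card.empty of_nat_0 of_nat_0_le_iff order_trans)
  next
    case False
    then obtain w0 a0 where a0: "E u a0" "E v a0" unfolding S1_def by blast
    have "S1 \<subseteq> {w \<in> V. E a0 w}"
    proof
      fix w assume "w \<in> S1"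
      then obtain a where a: "E u a" "E a w" "E v a" "w \<in> V" unfolding S1_def S_def by blast
      have "a = a0"
      proof (rule ccontr)
        assume "a \<noteq> a0"
        then have "has_cycle_of_length V E 4"
          using cyc4[OF sg, of u a v a0] a a0 Ei Es uv by auto
        then show False using n4 by blast
      qed
      then show "w \<in> {w \<in> V. E a0 w}" using a by blast
    qed
    then have "card S1 \<le> degree V E a0" unfolding degree_def
      by (intro card_mono) (use finV in auto)
    then show ?thesis using deg EV a0 by (meson of_nat_le_iff order_trans)
  qed
  have c2: "card (S - S1) \<le> 1"
  proof -
    have "w = w'" if w: "w \<in> S - S1" and w': "w' \<in> S - S1" for w w'
    proof (rule ccontr)
      assume ww: "w \<noteq> w'"
      from w obtain a b where ab: "E u a" "E a w" "E w b" "E b v" "w \<noteq> u" "w \<noteq> v" "w \<in> S"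
        unfolding S_def sq_adj_def by blast
      from w' obtain a' b' where ab': "E u a'" "E a' w'" "E w' b'" "E b' v" "w' \<noteq> u" "w' \<noteq> v" "w' \<in> S"
        unfolding S_def sq_adj_def by blast
      have na: "\<not> E v a" using w ab unfolding S1_def by blast
      have nb: "\<not> E u b" using w ab Es unfolding S1_def by blast
      have na': "\<not> E v a'" using w' ab' unfolding S1_def by blast
      have nb': "\<not> E u b'" using w' ab' Es unfolding S1_def by blast
      have nw: "\<not> E u w" "\<not> E v w" "\<not> E u w'" "\<not> E v w'" using noadj ab ab' by auto
      have d: "u \<noteq> a" "a \<noteq> w" "w \<noteq> b" "b \<noteq> v" "u \<noteq> a'" "a' \<noteq> w'" "w' \<noteq> b'" "b' \<noteq> v"
        using ab ab' Ei by metis+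
      have d2: "u \<noteq> b" "a \<noteq> v" "u \<noteq> b'" "a' \<noteq> v"
        using ab ab' nw Es by metis+
      have d3: "a \<noteq> w'" "a' \<noteq> w" "b \<noteq> w'" "b' \<noteq> w" "a \<noteq> b" "a' \<noteq> b'" "a \<noteq> b'" "a' \<noteq> b"
        using ab ab' nw Es na nb na' nb' by metis+
      note dd = d d2 d3 d[symmetric] d2[symmetric] d3[symmetric] uv uv[symmetric] ww ww[symmetric]
        ab(5,6) ab'(5,6) ab(5,6)[symmetric] ab'(5,6)[symmetric]
      have e: "E a u" "E w a" "E b w" "E v b" "E a' u" "E w' a'" "E b' w'" "E v b'"
        using ab ab' Es by blast+
      show False
      proof (cases "a = a'")
        case aa: True
        show False
        proof (cases "b = b'")
          case True
          have di: "distinct [a,w,b,w']" using dd by simp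
          have e1: "E b w'" using True e by simp
          have e2: "E w' a" using aa e by simp
          have "has_cycle_of_length V E 4"
            using cyc4[OF sg di ab(2) ab(3) e1 e2] .
          then show False using n4 by blast
        next
          case False
          have di: "distinct [a,w,b,v,b',w']" using dd False by simp
          have e2: "E w' a" using aa e by simp
          have "has_cycle_of_length V E 6"
            using cyc6[OF sg di ab(2) ab(3) ab(4) e(8) e(7) e2] .
          then show False using n6 by blast
        qed
      next
        case aa: False
        show False
        proof (cases "b = b'")
          case True
          have di: "distinct [u,a,w,b,w',a']" using dd aa by simp
          have e1: "E b w'" using True e by simp
          have "has_cycle_of_length V E 6"
            using cyc6[OF sg di ab(1) ab(2) ab(3) e1 e(6) e(5)] .
          then show False using n6 by blast
        next
          case False
          have di: "distinct [u,a,w,b,v,b',w',a']" using dd aa False by simp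
          have "has_cycle_of_length V E 8"
            using cyc8[OF sg di ab(1) ab(2) ab(3) ab(4) e(8) e(7) e(6) e(5)] .
          then show False using n8 by blast
        qed
      qed
    qed
    then show ?thesis using finS by (simp add: card_le_Suc0_iff_eq)
  qed
  have U: "S1 \<union> (S - S1) = S" unfolding S1_def by blast
  have "card S \<le> card S1 + card (S - S1)"
    using card_Un_le[of S1 "S - S1"] unfolding U .
  moreover have "num_paths2 V (sq_adj V E) u v = card S"
    unfolding num_paths2_def S_def by (rule arg_cong[where f=card]) blast
  ultimately show ?thesis using c1 c2 by linarith
qed

theorem lemmaA5:
  fixes c1 c2 :: real
  assumes "0 < c1" and "c1 \<le> c2"
  shows "\<exists>C::real. \<exists>N::nat. \<forall>n\<ge>N. \<forall>t::real. \<forall>V::nat set. \<forall>E.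
           1 \<le> t \<and> t \<le> real n powr 0.1 \<and>
           simple_graph V E \<and> card V = n \<and>
           (\<forall>v\<in>V. c1 * t \<le> real (degree V E v) \<and> real (degree V E v) \<le> c2 * t) \<and>
           (\<forall>k\<le>8. \<not> has_cycle_of_length V E k)
           \<longrightarrow> (\<forall>u\<in>V. \<forall>v\<in>V. u \<noteq> v \<longrightarrow> real (num_paths2 V (sq_adj V E) u v) \<le> C * t)"
proof (intro exI[of _ "c2 + 1"] exI[of _ 0] allI impI ballI)
  fix n t V E u v
  assume h: "1 \<le> t \<and> t \<le> real n powr 0.1 \<and>
           simple_graph V E \<and> card V = n \<and>
           (\<forall>v\<in>V. c1 * t \<le> real (degree V E v) \<and> real (degree V E v) \<le> c2 * t) \<and>
           (\<forall>k\<le>8. \<not> has_cycle_of_length V E k)" (is "_ \<and> _ \<and> ?sg \<and> _")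
    and u: "u \<in> V" and v: "v \<in> V" and uv: "u \<noteq> v"
  have sg: "simple_graph V E" and nc: "\<forall>k\<le>8. \<not> has_cycle_of_length V E k"
    and dg: "\<forall>x\<in>V. real (degree V E x) \<le> c2 * t"
    using h by auto
  have "real (num_paths2 V (sq_adj V E) u v) \<le> c2 * t + 1"
    by (rule main_bound[OF sg nc u v uv dg])
  also have "\<dots> \<le> (c2 + 1) * t" using h by (simp add: algebra_simps)
  finally show "real (num_paths2 V (sq_adj V E) u v) \<le> (c2 + 1) * t" .
qed

end
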